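(* Assume that $\nabla\kappa_S(0)=(m_1,\ldots,m_h)\neq 0$. Then we have the following cases. $(i)$ If there exists $i\in\{1,\ldots,h\}$ such that $x_im_i<0$, then $I_{\mathrm{MD}}(x;\nabla\kappa_S(0))=\infty$. $(ii)$ If there exists $i\in\{1,\ldots,h\}$ such that $m_i=0$ and $x_i\neq 0$, then $I_{\mathrm{MD}}(x;\nabla\kappa_S(0))=\infty$. $(iii)$ If there exists $c(x)\geq 0$ such that $x_i=c(x)m_i$ for every $i\in\{1,\ldots,h\}$, then $I_{\mathrm{MD}}(x;\nabla\kappa_S(0))=H_\nu(c(x);1)$ or, equivalently, $I_{\mathrm{MD}}(x;\nabla\kappa_S(0))=H_\nu(x_i;m_i)$ for every $i\in\{1,\ldots,h\}$.
   Context: Let $\{S(t):t\geq 0\}$ be an $\mathbb{R}^h$-valued Lévy process such that $\kappa_S(\theta):=\log\mathbb{E}[e^{\langle\theta,S(1)\rangle}]$ is finite in a neighborhood of the origin of $\mathbb{R}^h$ (where $\langle\cdot,\cdot\rangle$ is the inner product in $\mathbb{R}^h$), and let $\nu\in(0,1)$ and $\{L_\nu(t):t\geq 0\}$ be an inverse stable subordinator independent of $\{S(t)\}$. For $x=(x_1,\ldots,x_h)\in\mathbb{R}^h$ and $\nabla\kappa_S(0)\neq 0$, the (noncentral moderate deviation) rate function is defined by $$I_{\mathrm{MD}}(x;\nabla\kappa_S(0)):=\sup_{\theta\in\mathbb{R}^h}\{\langle\theta,x\rangle-(\langle\theta,\nabla\kappa_S(0)\rangle)^{1/\nu}1_{\langle\theta,\nabla\kappa_S(0)\rangle\geq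 0}\}$$ (it governs the LDP, with speed $1/a_t$, of $\{(a_tt)^{1-\nu}S(L_\nu(t))/t\}$ for $a_t\to 0$, $ta_t\to\infty$). For real $x$ and $m\neq 0$ define $$H_\nu(x;m):=\begin{cases}(\nu^{\nu/(1-\nu)}-\nu^{1/(1-\nu)})\left(\frac{x}{m}\right)^{1/(1-\nu)}&\text{if } \frac{x}{m}\geq 0\\ \infty&\text{if } \frac{x}{m}<0.\end{cases}$$ *)

theory Defs
  imports "HOL-Analysis.Analysis"
begin

definition I_MD :: "real \<Rightarrow> real^'n \<Rightarrow> real^'n \<Rightarrow> ereal" where
  "I_MD \<nu> x m = (SUP \<theta>\<in>UNIV. ereal (\<theta> \<bullet> x -
      (if \<theta> \<bullet> m \<ge> 0 then (\<theta> \<bullet> m) powr (1 / \<nu>) else 0)))"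

definition H_nu :: "real \<Rightarrow> real \<Rightarrow> real \<Rightarrow> ereal" where
  "H_nu \<nu> x m = (if x / m \<ge> 0
     then ereal ((\<nu> powr (\<nu> / (1 - \<nu>)) - \<nu> powr (1 / (1 - \<nu>))) * (x / m) powr (1 / (1 - \<nu>)))
     else \<infinity>)"

end

theory Submission
  imports Defs
begin

lemma Vform:
  fixes \<nu> :: real assumes "0<\<nu>" "\<nu><1"
  shows "\<nu> powr (\<nu>/(1-\<nu>)) - \<nu> powr (1/(1-\<nu>)) = (1-\<nu>) * \<nu> powr (\<nu>/(1-\<nu>))"
proof -
  have "1/(1-\<nu>) = 1 + \<nu>/(1-\<nu>)" using assms by (simp add: field_simps)
  hence "\<nu> powr (1/(1-\<nu>)) = \<nu> * \<nu> powr (\<nu>/(1-\<nu>))" using assms by (simp add: powr_add)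
  thus ?thesis by (simp add: algebra_simps)
qed

lemma key_le:
  fixes \<nu> k t :: real assumes "0<\<nu>" "\<nu><1" "k\<ge>0" "t\<ge>0"
  shows "k*t - t powr (1/\<nu>) \<le> (1-\<nu>) * \<nu> powr (\<nu>/(1-\<nu>)) * k powr (1/(1-\<nu>))"
proof (cases "k = 0 \<or> t = 0")
  case True thus ?thesis using assms by auto
next
  case False
  hence cp: "k>0" and sp: "t>0" using assms by auto
  define A where "A = t powr (1/\<nu>) / \<nu>"
  define B where "B = k powr (1/(1-\<nu>)) * \<nu> powr (\<nu>/(1-\<nu>))"
  have Ap: "A>0" using sp assms by (simp add: A_def)
  have Bp: "B>0" using cp assms by (simp add: B_def)
  have "A powr \<nu> * B powr (1-\<nu>) \<le> \<nu>*A + (1-\<nu>)*B"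
    using Youngs_inequality_0[of \<nu> "1-\<nu>" A B] assms Ap Bp by simp
  moreover have "A powr \<nu> = t / \<nu> powr \<nu>"
    using assms sp by (simp add: A_def powr_divide powr_powr)
  moreover have "B powr (1-\<nu>) = k * \<nu> powr \<nu>"
    using assms cp by (simp add: B_def powr_mult powr_powr)
  moreover have "\<nu>*A = t powr (1/\<nu>)" using assms by (simp add: A_def)
  ultimately have "k*t \<le> t powr (1/\<nu>) + (1-\<nu>)*B"
    using assms by (simp add: field_simps)
  thus ?thesis by (simp add: B_def algebra_simps)
qed

lemma key_eq:
  fixes \<nu> k :: real assumes "0<\<nu>" "\<nu><1" "k\<ge>0"
  shows "k*((k*\<nu>) powr (\<nu>/(1-\<nu>))) - ((k*\<nu>) powr (\<nu>/(1-\<nu>))) powr (1/\<nu>)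
     = (1-\<nu>) * \<nu> powr (\<nu>/(1-\<nu>)) * k powr (1/(1-\<nu>))"
proof (cases "k = 0")
  case True thus ?thesis using assms by auto
next
  case False
  hence cp: "k>0" using assms by auto
  have e1: "1/(1-\<nu>) = 1 + \<nu>/(1-\<nu>)" using assms by (simp add: field_simps)
  have "((k*\<nu>) powr (\<nu>/(1-\<nu>))) powr (1/\<nu>) = (k*\<nu>) powr (1/(1-\<nu>))"
    using assms by (simp add: powr_powr)
  also have "... = k*\<nu> * (k*\<nu>) powr (\<nu>/(1-\<nu>))"
    using assms cp by (subst e1, simp add: powr_add)
  finally have h1: "((k*\<nu>) powr (\<nu>/(1-\<nu>))) powr (1/\<nu>) = k*\<nu> * (k*\<nu>) powr (\<nu>/(1-\<nu>))" .
  have h2: "k powr (1/(1-\<nu>)) = k * k powr (\<nu>/(1-\<nu>))"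
    using cp by (subst e1, simp add: powr_add)
  have h3: "(k*\<nu>) powr (\<nu>/(1-\<nu>)) = k powr (\<nu>/(1-\<nu>)) * \<nu> powr (\<nu>/(1-\<nu>))"
    using assms cp by (simp add: powr_mult)
  show ?thesis unfolding h1 unfolding h3 h2 by (simp add: algebra_simps)
qed

lemma SUP_inf:
  fixes f :: "'a \<Rightarrow> real"
  assumes "\<And>B. \<exists>\<theta>. B < f \<theta>"
  shows "(SUP \<theta>\<in>UNIV. ereal (f \<theta>)) = \<infinity>"
proof -
  have "\<exists>\<theta>. y < ereal (f \<theta>)" if "y < top" for y
  proof (cases y)
    case (real r) then obtain \<theta> where "r < f \<theta>" using assms by blast
    thus ?thesis using real by auto
  next
    case PInf thus ?thesis using that by simp
  next
    case MInf thus ?thesis by simp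
  qed
  thus ?thesis by (simp add: top_ereal_def[symmetric])
qed

lemma case_inf:
  fixes \<nu> :: real and m x :: "real^'n"
  assumes "x$i \<noteq> 0" "x$i * m$i < 0 \<or> m$i = 0"
  shows "I_MD \<nu> x m = \<infinity>"
  unfolding I_MD_def
proof (rule SUP_inf)
  fix B :: real
  define \<theta> where "\<theta> = (axis i ((\<bar>B\<bar>+1) / x$i) :: real^'n)"
  have tx: "\<theta> \<bullet> x = \<bar>B\<bar>+1" using assms by (simp add: \<theta>_def inner_axis')
  have tm: "\<theta> \<bullet> m = (\<bar>B\<bar>+1) * m$i / x$i" by (simp add: \<theta>_def inner_axis')
  have "\<theta> \<bullet> m < 0 \<or> \<theta> \<bullet> m = 0"
  proof (cases "m$i = 0")
    case False
    hence "x$i * m$i < 0" using assms by auto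
    hence "m$i / x$i < 0" by (auto simp add: divide_less_0_iff mult_less_0_iff)
    hence "(\<bar>B\<bar>+1) * (m$i / x$i) < 0" using mult_pos_neg[of "\<bar>B\<bar>+1" "m$i / x$i"] by linarith
    thus ?thesis using tm by simp
  qed (simp add: tm)
  hence "(if \<theta> \<bullet> m \<ge> 0 then (\<theta> \<bullet> m) powr (1 / \<nu>) else 0) = 0" by auto
  thus "\<exists>\<theta>. B < \<theta> \<bullet> x - (if \<theta> \<bullet> m \<ge> 0 then (\<theta> \<bullet> m) powr (1 / \<nu>) else 0)"
    using tx by (intro exI[of _ \<theta>]) simp
qed

lemma case_fin:
  fixes \<nu> c :: real and m x :: "real^'n"
  assumes "0<\<nu>" "\<nu><1" "m \<noteq> 0" "c \<ge> 0" "\<And>i. x$i = c * m$i"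
  shows "I_MD \<nu> x m = ereal ((1-\<nu>) * \<nu> powr (\<nu>/(1-\<nu>)) * c powr (1/(1-\<nu>)))"
  (is "_ = ereal ?V")
proof -
  have xe: "x = c *\<^sub>R m" using assms(5) by (simp add: vec_eq_iff)
  have V0: "0 \<le> ?V" using assms by simp
  show ?thesis unfolding I_MD_def
  proof (rule antisym)
    show "(SUP \<theta>\<in>UNIV. ereal (\<theta> \<bullet> x - (if \<theta> \<bullet> m \<ge> 0 then (\<theta> \<bullet> m) powr (1 / \<nu>) else 0))) \<le> ereal ?V"
    proof (rule SUP_least)
      fix \<theta> :: "real^'n"
      have tx: "\<theta> \<bullet> x = c * (\<theta> \<bullet> m)" by (simp add: xe)
      show "ereal (\<theta> \<bullet> x - (if \<theta> \<bullet> m \<ge> 0 then (\<theta> \<bullet> m) powr (1 / \<nu>) else 0)) \<le> ereal ?V"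
      proof (cases "\<theta> \<bullet> m \<ge> 0")
        case True thus ?thesis using key_le[OF assms(1,2,4) True] tx by simp
      next
        case False
        hence "c * (\<theta> \<bullet> m) \<le> 0" using assms(4) by (simp add: mult_nonneg_nonpos)
        thus ?thesis using False tx V0 by simp
      qed
    qed
  next
    define t where "t = (c*\<nu>) powr (\<nu>/(1-\<nu>))"
    have t0: "t \<ge> 0" by (simp add: t_def)
    have mm: "m \<bullet> m > 0" using assms(3) by simp
    define \<theta> where "\<theta> = (t / (m \<bullet> m)) *\<^sub>R m"
    have tm: "\<theta> \<bullet> m = t" using mm by (simp add: \<theta>_def)
    have tx: "\<theta> \<bullet> x = c * t" using tm by (simp add: xe)
    have "ereal ?V = ereal (\<theta> \<bullet> x - (if \<theta> \<bullet> m \<ge> 0 then (\<theta> \<bullet> m) powr (1 / \<nu>) else 0))"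
      using tm tx t0 key_eq[OF assms(1,2,4)] by (simp add: t_def)
    also have "\<dots> \<le> (SUP \<theta>\<in>UNIV. ereal (\<theta> \<bullet> x - (if \<theta> \<bullet> m \<ge> 0 then (\<theta> \<bullet> m) powr (1 / \<nu>) else 0)))"
      by (rule SUP_upper) simp
    finally show "ereal ?V \<le> (SUP \<theta>\<in>UNIV. ereal (\<theta> \<bullet> x - (if \<theta> \<bullet> m \<ge> 0 then (\<theta> \<bullet> m) powr (1 / \<nu>) else 0)))" .
  qed
qed

theorem proposition3p4:
  fixes \<nu> :: real and m x :: "real^'n"
  assumes "0 < \<nu>" and "\<nu> < 1" and "m \<noteq> 0"
  shows "((\<exists>i. x$i * m$i < 0) \<longrightarrow> I_MD \<nu> x m = \<infinity>)
    \<and> ((\<exists>i. m$i = 0 \<and> x$i \<noteq> 0) \<longrightarrow> I_MD \<nu> x m = \<infinity>)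
    \<and> (\<forall>c::real. c \<ge> 0 \<and> (\<forall>i. x$i = c * m$i) \<longrightarrow>
         I_MD \<nu> x m = H_nu \<nu> c 1 \<and> (\<forall>i. m$i \<noteq> 0 \<longrightarrow> I_MD \<nu> x m = H_nu \<nu> (x$i) (m$i)))"
proof (intro conjI impI allI)
  assume "\<exists>i. x$i * m$i < 0"
  then obtain i where "x$i * m$i < 0" by blast
  thus "I_MD \<nu> x m = \<infinity>" by (intro case_inf[of x i]) auto
next
  assume "\<exists>i. m$i = 0 \<and> x$i \<noteq> 0"
  then obtain i where "m$i = 0" "x$i \<noteq> 0" by blast
  thus "I_MD \<nu> x m = \<infinity>" by (intro case_inf[of x i]) auto
next
  fix c :: real
  assume h: "c \<ge> 0 \<and> (\<forall>i. x$i = c * m$i)"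
  have I: "I_MD \<nu> x m = ereal ((1-\<nu>) * \<nu> powr (\<nu>/(1-\<nu>)) * c powr (1/(1-\<nu>)))"
    using case_fin[OF assms, of c x] h by blast
  have H: "H_nu \<nu> c 1 = ereal ((1-\<nu>) * \<nu> powr (\<nu>/(1-\<nu>)) * c powr (1/(1-\<nu>)))"
    using h Vform[OF assms(1,2)] by (simp add: H_nu_def)
  show "I_MD \<nu> x m = H_nu \<nu> c 1" using I H by simp
  fix i assume mi: "m$i \<noteq> 0"
  have "x$i / m$i = c" using h mi by simp
  hence "H_nu \<nu> (x$i) (m$i) = H_nu \<nu> c 1" by (simp add: H_nu_def)
  thus "I_MD \<nu> x m = H_nu \<nu> (x$i) (m$i)" using I H by simp
qed

end
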